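(* Let $(X_i,p_i)\to(X,p)$ be complete Riemannian manifolds converging in the pointed Gromov–Hausdorff sense and let $\pi_i:E_i\to X_i$ be vector bundles with bundle metrics and compatible connections, endowed with Sasaki-type metrics, converging to $(E,\varsigma(p))$, with $\pi:E\to X$ the limit projection. Let $\alpha:[0,1]\to X$ be a rectifiable curve. Then for every $u\in\pi^{-1}(\alpha(0))$ there exists a horizontal curve $\gamma$ in $E$ with $\gamma(0)=u$ and $\pi\circ\gamma=\alpha$; in particular $\gamma(1)\in\pi^{-1}(\alpha(1))$, i.e. $\mathcal{P}^\alpha(u)\neq\varnothing$.
   Context: $\pi:E\to X$ is a submetry (limit of the Riemannian submersions $\pi_i$); $\varsigma$ is the limit of the zero sections. A curve $\gamma$ in $E$ is horizontal if $\ell(\gamma)=\ell(\pi\circ\gamma)$. For a curve $\alpha$ in $X$ and $u\in\pi^{-1}(\alpha(0))$, $\mathcal{P}^\alpha(u)=\{\gamma(1):\gamma$ horizontal, $\gamma(0)=u$, $\pi\circ\gamma=\alpha\}$. *)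

theory Defs
  imports "HOL-Analysis.Analysis"
begin

definition curve_length :: "(real \<Rightarrow> 'a::metric_space) \<Rightarrow> real \<Rightarrow> real \<Rightarrow> ereal" where
  "curve_length f a b =
     (SUP p \<in> {(t, n). t (0::nat) = a \<and> t n = b \<and> (\<forall>k<n. t k \<le> t (Suc k))}.
        ereal (\<Sum>k < snd p. dist (f (fst p k)) (f (fst p (Suc k)))))"

definition rectifiable_curve :: "(real \<Rightarrow> 'a::metric_space) \<Rightarrow> bool" where
  "rectifiable_curve f \<longleftrightarrow> continuous_on {0..1} f \<and> curve_length f 0 1 < \<infinity>"

definition submetry :: "('e::metric_space \<Rightarrow> 'x::metric_space) \<Rightarrow> bool" where
  "submetry \<pi> \<longleftrightarrow> surj \<pi> \<and> (\<forall>e r. r \<ge> 0 \<longrightarrow> \<pi> ` cball e r = cball (\<pi> e) r)"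

definition horizontal :: "('e::metric_space \<Rightarrow> 'x::metric_space) \<Rightarrow> (real \<Rightarrow> 'e) \<Rightarrow> bool" where
  "horizontal \<pi> \<gamma> \<longleftrightarrow> continuous_on {0..1} \<gamma> \<and> curve_length \<gamma> 0 1 = curve_length (\<pi> \<circ> \<gamma>) 0 1"

definition horiz_transport ::
  "('e::metric_space \<Rightarrow> 'x::metric_space) \<Rightarrow> (real \<Rightarrow> 'x) \<Rightarrow> 'e \<Rightarrow> 'e set" where
  "horiz_transport \<pi> \<alpha> u =
     {\<gamma> 1 | \<gamma>. horizontal \<pi> \<gamma> \<and> \<gamma> 0 = u \<and> (\<forall>t\<in>{0..1}. \<pi> (\<gamma> t) = \<alpha> t)}"

end

theory Submission
  imports Defs
begin

definition parts :: "real \<Rightarrow> real \<Rightarrow> ((nat \<Rightarrow> real) \<times> nat) set" where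
  "parts a b = {(t, n). t (0::nat) = a \<and> t n = b \<and> (\<forall>k<n. t k \<le> t (Suc k))}"

definition psum :: "(real \<Rightarrow> 'a::metric_space) \<Rightarrow> ((nat \<Rightarrow> real) \<times> nat) \<Rightarrow> real" where
  "psum f p = (\<Sum>k < snd p. dist (f (fst p k)) (f (fst p (Suc k))))"

lemma cl_eq: "curve_length f a b = (SUP p\<in>parts a b. ereal (psum f p))"
  by (simp add: curve_length_def parts_def psum_def)

lemma parts_mono:
  assumes "(t,n) \<in> parts a b" "j \<le> k" "k \<le> n"
  shows "t j \<le> t k"
  using assms(2,3)
proof (induction k)
  case 0 then show ?case by simp
next
  case (Suc k)
  show ?case
  proof (cases "j = Suc k")
    case False
    then have "t j \<le> t k" using Suc by simp
    also have "t k \<le> t (Suc k)" using assms(1) Suc.prems by (auto simp: parts_def)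
    finally show ?thesis .
  qed simp
qed

lemma parts_range:
  assumes "(t,n) \<in> parts a b" "k \<le> n"
  shows "a \<le> t k \<and> t k \<le> b"
  using parts_mono[OF assms(1), of 0 k] parts_mono[OF assms(1), of k n] assms
  by (auto simp: parts_def)

lemma parts_le: "(t,n) \<in> parts a b \<Longrightarrow> a \<le> b"
  using parts_range[of t n a b n] by auto

lemma parts_triv: "a \<le> b \<Longrightarrow> ((\<lambda>k. if k = 0 then a else b), 1) \<in> parts a b"
  by (auto simp: parts_def)

lemma psum_triv: "psum f ((\<lambda>k. if k = 0 then a else b), 1) = dist (f a) (f b)"
  by (simp add: psum_def)

lemma psum_nonneg: "psum f p \<ge> 0"
  by (simp add: psum_def sum_nonneg)

lemma clamp_parts:
  assumes "(t,n) \<in> parts a b" "a \<le> c" "c \<le> b"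
  shows "((\<lambda>k. min c (t k)), n) \<in> parts a c"
    and "((\<lambda>k. max c (t k)), n) \<in> parts c b"
    and "psum f (t,n) \<le> psum f ((\<lambda>k. min c (t k)), n) + psum f ((\<lambda>k. max c (t k)), n)"
proof -
  show "((\<lambda>k. min c (t k)), n) \<in> parts a c" "((\<lambda>k. max c (t k)), n) \<in> parts c b"
    using assms by (auto simp: parts_def min_def max_def)
  have "dist (f (t k)) (f (t (Suc k))) \<le> dist (f (min c (t k))) (f (min c (t (Suc k))))
          + dist (f (max c (t k))) (f (max c (t (Suc k))))" if "k < n" for k
  proof -
    have le: "t k \<le> t (Suc k)" using assms(1) that by (auto simp: parts_def)
    consider "t (Suc k) \<le> c" | "c \<le> t k" | "t k \<le> c" "c \<le> t (Suc k)" by linarith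
    then show ?thesis
    proof cases
      case 1 then show ?thesis using le by (simp add: min_def max_def)
    next
      case 2 then show ?thesis using le by (simp add: min_def max_def)
    next
      case 3 then show ?thesis using le dist_triangle[of "f (t k)" "f (t (Suc k))" "f c"]
        by (simp add: min_def max_def)
    qed
  qed
  then show "psum f (t,n) \<le> psum f ((\<lambda>k. min c (t k)), n) + psum f ((\<lambda>k. max c (t k)), n)"
    unfolding psum_def by (simp add: sum.distrib[symmetric]) (rule sum_mono, simp)
qed

lemma sum_split_nat: "(\<Sum>k<n+m. g k) = (\<Sum>k<n. g k) + (\<Sum>i<m. g (n+i::nat))" for g :: "nat \<Rightarrow> real"
  by (induction m) (auto simp: add.assoc)

lemma concat_parts:
  assumes "(t,n) \<in> parts a x" "(t',m) \<in> parts x b"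
  shows "((\<lambda>k. if k \<le> n then t k else t' (k-n)), n+m) \<in> parts a b"
    and "psum f ((\<lambda>k. if k \<le> n then t k else t' (k-n)), n+m) = psum f (t,n) + psum f (t',m)"
proof -
  define T where "T = (\<lambda>k. if k \<le> n then t k else t' (k-n))"
  have T2: "T (n+i) = t' i" for i
    using assms by (auto simp: T_def parts_def)
  have mono: "T k \<le> T (Suc k)" if k: "k < n+m" for k
  proof (cases "Suc k \<le> n")
    case True then show ?thesis using assms by (auto simp: parts_def T_def)
  next
    case False
    then obtain i where i: "k = n + i" "i < m" using k by (metis add_less_imp_less_left le_Suc_ex not_less_eq_eq)
    then show ?thesis using T2[of i] T2[of "Suc i"] assms by (auto simp: parts_def)
  qed
  have "T 0 = a" "T (n+m) = b" using assms T2[of m] by (auto simp: parts_def T_def)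
  then show "((\<lambda>k. if k \<le> n then t k else t' (k-n)), n+m) \<in> parts a b"
    using mono unfolding parts_def T_def by auto
  have "psum f (T, n+m) = (\<Sum>k<n. dist (f (T k)) (f (T (Suc k)))) + (\<Sum>i<m. dist (f (T (n+i))) (f (T (Suc (n+i)))))"
    unfolding psum_def by (simp add: sum_split_nat)
  also have "(\<Sum>k<n. dist (f (T k)) (f (T (Suc k)))) = psum f (t,n)"
    unfolding psum_def by (intro sum.cong) (auto simp: T_def)
  also have "(\<Sum>i<m. dist (f (T (n+i))) (f (T (Suc (n+i))))) = psum f (t',m)"
    unfolding psum_def using T2[of "Suc _"] by (simp add: T2)
  finally show "psum f ((\<lambda>k. if k \<le> n then t k else t' (k-n)), n+m) = psum f (t,n) + psum f (t',m)"
    by (simp add: T_def)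
qed

lemma two_valued_psum:
  assumes "x \<le> y" "\<forall>k\<le>n. c k = x \<or> c k = y" "\<forall>k<n. c k \<le> c (Suc k)"
  shows "psum f (c,n) \<le> (if c n = y then dist (f x) (f y) else 0)"
  using assms(2,3)
proof (induction n)
  case 0 then show ?case by (simp add: psum_def)
next
  case (Suc n)
  have IH: "psum f (c,n) \<le> (if c n = y then dist (f x) (f y) else 0)"
    using Suc by auto
  have ps: "psum f (c, Suc n) = psum f (c,n) + dist (f (c n)) (f (c (Suc n)))"
    by (simp add: psum_def)
  have mono: "c n \<le> c (Suc n)" using Suc.prems by auto
  have cn: "c n = x \<or> c n = y" "c (Suc n) = x \<or> c (Suc n) = y" using Suc.prems by auto
  show ?case
  proof (cases "x = y")
    case True
    then have "c n = x" "c (Suc n) = x" using cn by auto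
    then show ?thesis using IH ps True by auto
  next
    case False
    then show ?thesis using IH ps cn mono assms(1) by (auto simp: dist_commute)
  qed
qed


lemma cl_ge: "p \<in> parts a b \<Longrightarrow> ereal (psum f p) \<le> curve_length f a b"
  unfolding cl_eq by (rule SUP_upper)

lemma cl_le: "(\<And>p. p \<in> parts a b \<Longrightarrow> psum f p \<le> B) \<Longrightarrow> curve_length f a b \<le> ereal B"
  unfolding cl_eq by (rule SUP_least) simp

lemma cl_fin:
  assumes "a \<le> b" "curve_length f a b < \<infinity>"
  shows "curve_length f a b = ereal (real_of_ereal (curve_length f a b))"
    and "0 \<le> real_of_ereal (curve_length f a b)"
    and "\<And>p. p \<in> parts a b \<Longrightarrow> psum f p \<le> real_of_ereal (curve_length f a b)"
proof -
  have "ereal 0 \<le> curve_length f a b"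
    using cl_ge[OF parts_triv[OF assms(1)], of f] psum_nonneg[of f] order_trans ereal_less_eq(3) by blast
  then show e: "curve_length f a b = ereal (real_of_ereal (curve_length f a b))"
    using assms(2) by (cases "curve_length f a b") auto
  show "0 \<le> real_of_ereal (curve_length f a b)"
    using \<open>ereal 0 \<le> _\<close> e by (metis ereal_less_eq(3))
  fix p assume "p \<in> parts a b"
  then show "psum f p \<le> real_of_ereal (curve_length f a b)"
    using cl_ge[of p a b f] e by (metis ereal_less_eq(3))
qed

lemma cl_approx:
  assumes "a \<le> b" "curve_length f a b < \<infinity>" "e > 0"
  shows "\<exists>p\<in>parts a b. psum f p > real_of_ereal (curve_length f a b) - e"
proof -
  obtain R where R: "curve_length f a b = ereal R"
    using cl_fin(1)[OF assms(1,2)] by blast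
  have "ereal (real_of_ereal (curve_length f a b) - e) < curve_length f a b"
    using assms(3) unfolding R by simp
  then show ?thesis unfolding cl_eq less_SUP_iff by auto
qed

lemma cl_add:
  assumes "a \<le> x" "x \<le> b" "curve_length f a b < \<infinity>"
  shows "curve_length f a x < \<infinity>" "curve_length f x b < \<infinity>"
    "real_of_ereal (curve_length f a b) = real_of_ereal (curve_length f a x) + real_of_ereal (curve_length f x b)"
proof -
  define B where "B = real_of_ereal (curve_length f a b)"
  have ab: "a \<le> b" using assms by simp
  have sum_le: "psum f p1 + psum f p2 \<le> B" if "p1 \<in> parts a x" "p2 \<in> parts x b" for p1 p2
  proof -
    obtain t n t' m where "p1 = (t,n)" "p2 = (t',m)" by (cases p1, cases p2)
    then have pp: "(t,n) \<in> parts a x" "(t',m) \<in> parts x b" using that by auto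
    have "psum f ((\<lambda>k. if k \<le> n then t k else t' (k-n)), n+m) \<le> B"
      using cl_fin(3)[OF ab assms(3) concat_parts(1)[OF pp]] unfolding B_def .
    then show ?thesis using concat_parts(2)[OF pp, of f]
      unfolding \<open>p1 = (t,n)\<close> \<open>p2 = (t',m)\<close> by simp
  qed
  have L1: "curve_length f a x \<le> ereal (B - psum f p2)" if "p2 \<in> parts x b" for p2
  proof (rule cl_le)
    fix p assume "p \<in> parts a x"
    from sum_le[OF this that] show "psum f p \<le> B - psum f p2" by linarith
  qed
  have "curve_length f a x \<le> ereal (B - psum f ((\<lambda>k. if k = 0 then x else b), 1))"
    using L1[OF parts_triv[OF assms(2)]] .
  then show fin1: "curve_length f a x < \<infinity>"
    by (rule order.strict_trans1) simp
  define C1 where "C1 = real_of_ereal (curve_length f a x)"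
  have L2: "curve_length f x b \<le> ereal (B - C1)"
  proof (rule cl_le)
    fix p2 assume "p2 \<in> parts x b"
    have e1: "ereal C1 = curve_length f a x"
      using cl_fin(1)[OF assms(1) fin1] unfolding C1_def by simp
    have "ereal C1 \<le> ereal (B - psum f p2)"
      unfolding e1 by (rule L1[OF \<open>p2 \<in> parts x b\<close>])
    then show "psum f p2 \<le> B - C1" by simp
  qed
  then show fin2: "curve_length f x b < \<infinity>"
    by (rule order.strict_trans1) simp
  define C2 where "C2 = real_of_ereal (curve_length f x b)"
  have e2: "ereal C2 = curve_length f x b"
    using cl_fin(1)[OF assms(2) fin2] unfolding C2_def by simp
  have "ereal C2 \<le> ereal (B - C1)" using L2 unfolding e2 .
  then have le1: "C1 + C2 \<le> B" by simp
  have "curve_length f a b \<le> ereal (C1 + C2)"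
  proof (rule cl_le)
    fix p assume "p \<in> parts a b"
    moreover obtain t n where "p = (t,n)" by (cases p)
    ultimately have p: "(t,n) \<in> parts a b" by simp
    have "psum f (t,n) \<le> psum f ((\<lambda>k. min x (t k)), n) + psum f ((\<lambda>k. max x (t k)), n)"
      by (rule clamp_parts(3)[OF p assms(1,2)])
    also have "\<dots> \<le> C1 + C2"
      using cl_fin(3)[OF assms(1) fin1 clamp_parts(1)[OF p assms(1,2)]]
        cl_fin(3)[OF assms(2) fin2 clamp_parts(2)[OF p assms(1,2)]]
      unfolding C1_def C2_def by linarith
    finally show "psum f p \<le> C1 + C2" using \<open>p = (t,n)\<close> by simp
  qed
  moreover have "ereal B = curve_length f a b"
    using cl_fin(1)[OF ab assms(3)] unfolding B_def by simp
  ultimately have "ereal B \<le> ereal (C1 + C2)" by simp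
  then have "B \<le> C1 + C2" by simp
  then show "real_of_ereal (curve_length f a b) = real_of_ereal (curve_length f a x) + real_of_ereal (curve_length f x b)"
    using le1 unfolding B_def C1_def C2_def by linarith
qed


locale rcurve =
  fixes \<alpha> :: "real \<Rightarrow> 'a::metric_space"
  assumes cont: "continuous_on {0..1} \<alpha>"
    and fin: "curve_length \<alpha> 0 1 < \<infinity>"
begin

definition ell where "ell t = real_of_ereal (curve_length \<alpha> 0 t)"
definition D where "D x y = real_of_ereal (curve_length \<alpha> x y)"

lemma fin_sub: "0 \<le> x \<Longrightarrow> x \<le> y \<Longrightarrow> y \<le> 1 \<Longrightarrow> curve_length \<alpha> x y < \<infinity>"
proof -
  assume h: "0 \<le> x" "x \<le> y" "y \<le> 1"
  have "curve_length \<alpha> 0 y < \<infinity>" using cl_add(1)[of 0 y 1 \<alpha>] h fin by simp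
  then show ?thesis using cl_add(2)[of 0 x y \<alpha>] h by simp
qed

lemma ell_add: "0 \<le> x \<Longrightarrow> x \<le> y \<Longrightarrow> y \<le> 1 \<Longrightarrow> ell y = ell x + D x y"
  unfolding ell_def D_def using cl_add(3)[of 0 x y \<alpha>] fin_sub[of 0 y] by simp

lemma D_nonneg: "0 \<le> x \<Longrightarrow> x \<le> y \<Longrightarrow> y \<le> 1 \<Longrightarrow> 0 \<le> D x y"
  unfolding D_def using cl_fin(2) fin_sub by blast

lemma D_ge: "0 \<le> x \<Longrightarrow> x \<le> y \<Longrightarrow> y \<le> 1 \<Longrightarrow> dist (\<alpha> x) (\<alpha> y) \<le> D x y"
  unfolding D_def using cl_fin(3)[OF _ fin_sub parts_triv, of x y] psum_triv[of \<alpha> x y] by simp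

lemma ell0: "ell 0 = 0"
proof -
  have "ell 0 = ell 0 + D 0 0" by (rule ell_add) auto
  moreover have "D 0 0 = ell 0" by (simp add: ell_def D_def)
  ultimately show ?thesis by linarith
qed

lemma ell_mono: "0 \<le> x \<Longrightarrow> x \<le> y \<Longrightarrow> y \<le> 1 \<Longrightarrow> ell x \<le> ell y"
  using ell_add[of x y] D_nonneg[of x y] by linarith

lemma ell_step: "0 \<le> x \<Longrightarrow> x \<le> y \<Longrightarrow> y \<le> 1 \<Longrightarrow> ell x + dist (\<alpha> x) (\<alpha> y) \<le> ell y"
  using ell_add[of x y] D_ge[of x y] by linarith

lemma gap:
  assumes xy: "0 \<le> x" "x \<le> y" "y \<le> 1" and P: "(t,n) \<in> parts 0 1"
    and g: "\<forall>k\<le>n. t k \<le> x \<or> y \<le> t k"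
  shows "D x y \<le> (ell 1 - psum \<alpha> (t,n)) + dist (\<alpha> x) (\<alpha> y)"
proof -
  have x1: "x \<le> 1" "0 \<le> y" using xy by auto
  note c11 = clamp_parts(1)[OF P xy(1) x1(1)]
  note c12 = clamp_parts(2)[OF P xy(1) x1(1)]
  note c13 = clamp_parts(3)[OF P xy(1) x1(1), of \<alpha>]
  note c22 = clamp_parts(2)[OF c12 xy(2) xy(3)]
  note c23 = clamp_parts(3)[OF c12 xy(2) xy(3), of \<alpha>]
  have low: "psum \<alpha> ((\<lambda>k. min x (t k)), n) \<le> ell x"
    using cl_fin(3)[OF xy(1) fin_sub[OF order_refl xy(1) x1(1)] c11] unfolding ell_def .
  have high: "psum \<alpha> ((\<lambda>k. max y (max x (t k))), n) \<le> D y 1"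
    using cl_fin(3)[OF xy(3) fin_sub[OF x1(2) xy(3) order_refl] c22] unfolding D_def .
  have mid: "psum \<alpha> ((\<lambda>k. min y (max x (t k))), n) \<le> dist (\<alpha> x) (\<alpha> y)"
  proof -
    have "psum \<alpha> ((\<lambda>k. min y (max x (t k))), n) \<le> (if min y (max x (t n)) = y then dist (\<alpha> x) (\<alpha> y) else 0)"
    proof (rule two_valued_psum[OF xy(2)])
      show "\<forall>k\<le>n. min y (max x (t k)) = x \<or> min y (max x (t k)) = y"
        using g xy(2) by (auto simp: min_def max_def)
      show "\<forall>k<n. min y (max x (t k)) \<le> min y (max x (t (Suc k)))"
        using P by (auto simp: parts_def min_def max_def)
    qed
    then show ?thesis using zero_le_dist[of "\<alpha> x" "\<alpha> y"] by (smt (verit))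
  qed
  have "ell 1 = ell x + D x y + D y 1"
    using ell_add[OF xy(1) x1(1) order_refl] ell_add[OF xy] ell_add[OF x1(2) xy(3) order_refl] by linarith
  then show ?thesis using c13 c23 low high mid by linarith
qed

lemma ell_cont:
  assumes s: "0 \<le> s" "s \<le> 1" and e: "e > 0"
  shows "\<exists>d>0. \<forall>s'. 0 \<le> s' \<and> s' \<le> 1 \<and> \<bar>s' - s\<bar> < d \<longrightarrow> \<bar>ell s' - ell s\<bar> < e"
proof -
  obtain p where p: "p \<in> parts 0 1" "psum \<alpha> p > ell 1 - e/2"
    using cl_approx[of 0 1 \<alpha> "e/2"] fin e unfolding ell_def by auto
  obtain t n where tn: "p = (t,n)" by (cases p)
  have P: "(t,n) \<in> parts 0 1" using p tn by simp
  have sI: "s \<in> {0..1}" using s by simp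
  have e2: "e/2 > 0" using e by simp
  obtain d1 where d1: "d1 > 0" "\<forall>s'\<in>{0..1}. dist s' s < d1 \<longrightarrow> dist (\<alpha> s') (\<alpha> s) < e/2"
    using cont[unfolded continuous_on_iff, rule_format, OF sI e2] by blast
  define Q where "Q = t ` {..n} - {s}"
  have Qf: "finite Q" unfolding Q_def by simp
  define d2 where "d2 = (if Q = {} then 1 else Min ((\<lambda>q. \<bar>q - s\<bar>) ` Q))"
  have d2pos: "d2 > 0" unfolding d2_def using Qf by (auto simp: Q_def)
  have d2le: "d2 \<le> \<bar>q - s\<bar>" if "q \<in> Q" for q
    unfolding d2_def using that Qf by auto
  define d where "d = min d1 d2"
  have "\<bar>ell s' - ell s\<bar> < e" if s': "0 \<le> s'" "s' \<le> 1" "\<bar>s' - s\<bar> < d" for s'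
  proof -
    have dd: "dist (\<alpha> s') (\<alpha> s) < e/2" using d1 s' s unfolding d_def by (auto simp: dist_real_def)
    have gap': "t k \<le> min s s' \<or> max s s' \<le> t k" if "k \<le> n" for k
    proof (rule ccontr)
      assume "\<not> ?thesis"
      then have h: "min s s' < t k" "t k < max s s'" by auto
      have ne: "t k \<noteq> s" using h by (cases "s \<le> s'") (simp_all add: min_def max_def)
      have ab: "\<bar>t k - s\<bar> < \<bar>s' - s\<bar>" using h by (cases "s \<le> s'") (simp_all add: min_def max_def)
      have "t k \<in> Q" unfolding Q_def using that ne by auto
      then have "d2 \<le> \<bar>t k - s\<bar>" by (rule d2le)
      moreover have "d \<le> d2" by (simp add: d_def)
      ultimately show False using ab s'(3) by linarith
    qed
    have G: "D (min s s') (max s s') \<le> (ell 1 - psum \<alpha> (t,n)) + dist (\<alpha> (min s s')) (\<alpha> (max s s'))"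
      by (rule gap) (use s s' P gap' in auto)
    have "dist (\<alpha> (min s s')) (\<alpha> (max s s')) = dist (\<alpha> s') (\<alpha> s)"
      by (auto simp: min_def max_def dist_commute)
    moreover have "\<bar>ell s' - ell s\<bar> = D (min s s') (max s s')"
    proof (cases "s \<le> s'")
      case True
      then show ?thesis using ell_add[of s s'] s s' D_nonneg[of s s'] by (simp add: min_def max_def)
    next
      case False
      then show ?thesis using ell_add[of s' s] s s' D_nonneg[of s' s] by (simp add: min_def max_def)
    qed
    moreover have "psum \<alpha> (t,n) > ell 1 - e/2" using p tn by simp
    ultimately show ?thesis using G dd by linarith
  qed
  moreover have "d > 0" using d1 d2pos unfolding d_def by simp
  ultimately show ?thesis by blast
qed

end

lemma compact_Pi:
  fixes C :: "'i \<Rightarrow> 'b::topological_space set"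
  assumes "\<And>i. compact (C i)"
  shows "compact (Pi UNIV C)"
proof -
  have "compactin (product_topology (\<lambda>i. euclidean) UNIV) (PiE UNIV C)"
    using assms by (simp add: compactin_PiE)
  then show ?thesis by (simp add: euclidean_product_topology PiE_UNIV_domain)
qed

lemma closed_dist_le_fun:
  fixes s t :: 'i and c :: real
  shows "closed {f :: 'i \<Rightarrow> 'b::metric_space. dist (f s) (f t) \<le> c}"
proof -
  have "continuous_on UNIV (\<lambda>f :: 'i \<Rightarrow> 'b. dist (f s) (f t))"
    by (intro continuous_intros continuous_on_product_coordinates)
  then show ?thesis
    using closed_Collect_le[of "\<lambda>f :: 'i \<Rightarrow> 'b. dist (f s) (f t)" "\<lambda>_. c"]
    by (simp add: continuous_on_const)
qed

lemma sub_lip: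
  assumes "submetry \<pi>"
  shows "dist (\<pi> x) (\<pi> y) \<le> dist x y"
proof -
  have "y \<in> cball x (dist x y)" by simp
  then have "\<pi> y \<in> \<pi> ` cball x (dist x y)" by blast
  also have "\<dots> = cball (\<pi> x) (dist x y)" using assms unfolding submetry_def by simp
  finally show ?thesis by simp
qed

lemma sub_lift:
  assumes "submetry \<pi>"
  shows "\<exists>e'. \<pi> e' = q \<and> dist e e' \<le> dist (\<pi> e) q"
proof -
  have "q \<in> cball (\<pi> e) (dist (\<pi> e) q)" by simp
  also have "\<dots> = \<pi> ` cball e (dist (\<pi> e) q)" using assms unfolding submetry_def by simp
  finally show ?thesis by auto
qed

lemma sub_cont:
  assumes "submetry \<pi>"
  shows "continuous_on UNIV \<pi>"
  unfolding continuous_on_iff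
  using sub_lip[OF assms] by (meson le_less_trans)


locale liftctx = rcurve \<alpha> for \<alpha> :: "real \<Rightarrow> 'x::metric_space" +
  fixes \<pi> :: "'e::heine_borel \<Rightarrow> 'x" and u :: 'e
  assumes sub: "submetry \<pi>" and u0: "\<pi> u = \<alpha> 0"
begin

definition C where "C t = (if t \<in> {0<..1} then \<pi> -` {\<alpha> t} \<inter> cball u (ell 1) else {u})"

lemma C_ne: "\<exists>e. e \<in> C t"
proof (cases "t \<in> {0<..1}")
  case True
  obtain e where e: "\<pi> e = \<alpha> t" "dist u e \<le> dist (\<pi> u) (\<alpha> t)" using sub_lift[OF sub] by blast
  have "dist (\<alpha> 0) (\<alpha> t) \<le> ell t" using ell_step[of 0 t] ell0 True by simp
  moreover have "ell t \<le> ell 1" using ell_mono[of t 1] True by simp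
  ultimately have "e \<in> C t" using e True u0 by (simp add: C_def)
  then show ?thesis by blast
qed (auto simp: C_def)

lemma C_compact: "compact (C t)"
proof -
  have "closed (\<pi> -` {\<alpha> t})"
    using sub_cont[OF sub] by (simp add: closed_vimage continuous_on_eq_continuous_at)
  then have "compact (\<pi> -` {\<alpha> t} \<inter> cball u (ell 1))"
    by (simp add: compact_eq_bounded_closed closed_Int bounded_Int)
  then show ?thesis unfolding C_def by (cases "t \<in> {0<..1}") auto
qed

lemma C_0: assumes "t \<notin> {0<..1}" shows "C t = {u}"
  unfolding C_def using assms by (rule if_not_P)

lemma finite_lift:
  assumes "finite A" "A \<subseteq> {0<..1}"
  shows "\<exists>g. (\<forall>x. g x \<in> C x) \<and> (\<forall>x\<in>insert 0 A. \<forall>y\<in>insert 0 A. x \<le> y \<longrightarrow> dist (g x) (g y) \<le> ell y - ell x)"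
  using assms
proof (induction A rule: finite_linorder_max_induct)
  case empty
  define g where "g x = (SOME e. e \<in> C x)" for x
  have "\<forall>x. g x \<in> C x" unfolding g_def using C_ne by (metis someI_ex)
  then show ?case by auto
next
  case (insert b A)
  then obtain g where g: "\<forall>x. g x \<in> C x"
    "\<forall>x\<in>insert 0 A. \<forall>y\<in>insert 0 A. x \<le> y \<longrightarrow> dist (g x) (g y) \<le> ell y - ell x" by auto
  have b: "0 < b" "b \<le> 1" using insert by auto
  have A01: "\<forall>a\<in>A. 0 < a \<and> a \<le> 1" using insert by auto
  define m where "m = Max (insert 0 A)"
  have mA: "m \<in> insert 0 A" unfolding m_def using insert(1) by (intro Max_in) auto
  have mge: "x \<le> m" if "x \<in> insert 0 A" for x unfolding m_def using insert(1) that by simp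
  have mb: "m < b" using mA insert(2) b by auto
  have m0: "0 \<le> m" using mge[of 0] by simp
  have m1: "m \<le> 1" using mb b by simp
  have pim: "\<pi> (g m) = \<alpha> m"
  proof (cases "m = 0")
    case True
    then have "g m = u" using g(1)[rule_format, of m] C_0[of m] by simp
    then show ?thesis using True u0 by simp
  next
    case False
    then have "m \<in> {0<..1}" using m0 m1 by simp
    then show ?thesis using g(1)[rule_format, of m] by (simp add: C_def)
  qed
  obtain e where e: "\<pi> e = \<alpha> b" "dist (g m) e \<le> dist (\<pi> (g m)) (\<alpha> b)" using sub_lift[OF sub] by blast
  have de: "dist (g m) e \<le> ell b - ell m" using e pim ell_step[of m b] m0 mb b by simp
  have g0: "g 0 = u" using g(1)[rule_format, of 0] C_0[of 0] by simp
  have "dist u (g m) \<le> ell m - ell 0" using g(2) mA m0 g0 by auto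
  then have "dist u e \<le> ell b" using de dist_triangle[of u e "g m"] ell0 by simp
  moreover have "ell b \<le> ell 1" using ell_mono[of b 1] b by simp
  ultimately have eC: "e \<in> C b" using b e by (simp add: C_def)
  define g' where "g' = g(b := e)"
  have bn: "b \<notin> insert 0 A" using insert(2) b by auto
  have "\<forall>x. g' x \<in> C x" using g eC by (simp add: g'_def)
  moreover have "dist (g' x) (g' y) \<le> ell y - ell x"
    if x: "x \<in> insert 0 (insert b A)" and y: "y \<in> insert 0 (insert b A)" and xy: "x \<le> y" for x y
  proof (cases "y = b")
    case yb: True
    show ?thesis
    proof (cases "x = b")
      case True then show ?thesis using yb by simp
    next
      case False
      then have xA: "x \<in> insert 0 A" using x by simp
      then have "x \<le> m" by (rule mge)
      have x0: "0 \<le> x" using xA A01 by auto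
      have "dist (g x) (g m) \<le> ell m - ell x" using g(2) xA mA \<open>x \<le> m\<close> by auto
      then have "dist (g x) e \<le> ell b - ell x" using de dist_triangle[of "g x" e "g m"] by simp
      moreover have "g' x = g x" using False by (simp add: g'_def)
      ultimately show ?thesis using yb by (simp add: g'_def)
    qed
  next
    case False
    then have yA: "y \<in> insert 0 A" using y by simp
    have xA: "x \<in> insert 0 A"
    proof (rule ccontr)
      assume "x \<notin> insert 0 A"
      then have "x = b" using x by simp
      then show False using mge[OF yA] mb xy by simp
    qed
    have "x \<noteq> b" "y \<noteq> b" using xA yA bn by auto
    then have "g' x = g x" "g' y = g y" by (auto simp: g'_def)
    then show ?thesis using g(2) xA yA xy by metis
  qed
  ultimately show ?case by blast
qed

lemma global_lift:
  "\<exists>f. (\<forall>x. f x \<in> C x) \<and> (\<forall>x y. 0 \<le> x \<longrightarrow> x \<le> y \<longrightarrow> y \<le> 1 \<longrightarrow> dist (f x) (f y) \<le> ell y - ell x)"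
proof -
  define K where "K = Pi UNIV C"
  have K: "compact K" unfolding K_def by (rule compact_Pi[OF C_compact])
  define T where "T = (\<lambda>(x,y). {f::real \<Rightarrow> 'e. dist (f x) (f y) \<le> ell y - ell x})"
  define I where "I = {(x::real,y::real). 0 \<le> x \<and> x \<le> y \<and> y \<le> 1}"
  have "K \<inter> \<Inter>(T ` I) \<noteq> {}"
  proof (rule compact_imp_fip[OF K])
    fix S assume "S \<in> T ` I"
    then show "closed S" unfolding T_def by (auto simp: closed_dist_le_fun)
  next
    fix F' assume F': "finite F'" "F' \<subseteq> T ` I"
    obtain S where S: "S \<subseteq> I" "finite S" "F' = T ` S"
      using finite_subset_image[OF F'] by blast
    define A where "A = (fst ` S \<union> snd ` S) \<inter> {0<..1}"
    have "finite A" "A \<subseteq> {0<..1}" unfolding A_def using S by auto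
    then obtain g where g: "\<forall>x. g x \<in> C x"
      "\<forall>x\<in>insert 0 A. \<forall>y\<in>insert 0 A. x \<le> y \<longrightarrow> dist (g x) (g y) \<le> ell y - ell x"
      using finite_lift by blast
    have "g \<in> K" unfolding K_def using g(1) by auto
    moreover have "g \<in> T p" if "p \<in> S" for p
    proof -
      obtain x y where p: "p = (x,y)" by (cases p)
      have xy: "0 \<le> x" "x \<le> y" "y \<le> 1" using S(1) that p by (auto simp: I_def)
      have "x \<in> insert 0 A" using xy that p unfolding A_def by (cases "x = 0") force+
      moreover have "y \<in> insert 0 A" using xy that p unfolding A_def by (cases "y = 0") force+
      ultimately have "dist (g x) (g y) \<le> ell y - ell x" using g(2) xy by blast
      then show ?thesis unfolding p T_def by simp
    qed
    ultimately show "K \<inter> \<Inter>F' \<noteq> {}" using S(3) by blast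
  qed
  then obtain f where "f \<in> K" "\<forall>p\<in>I. f \<in> T p" by blast
  then show ?thesis unfolding K_def T_def I_def by auto
qed

lemma main_lift:
  "\<exists>\<gamma>. horizontal \<pi> \<gamma> \<and> \<gamma> 0 = u \<and> (\<forall>t\<in>{0..1}. \<pi> (\<gamma> t) = \<alpha> t)"
proof -
  obtain f where fC: "\<forall>x. f x \<in> C x"
    and fd: "\<forall>x y. 0 \<le> x \<longrightarrow> x \<le> y \<longrightarrow> y \<le> 1 \<longrightarrow> dist (f x) (f y) \<le> ell y - ell x"
    using global_lift by blast
  have f0: "f 0 = u" using fC C_0[of 0] by auto
  have fpi: "\<pi> (f t) = \<alpha> t" if "t \<in> {0..1}" for t
  proof (cases "t = 0")
    case True then show ?thesis using f0 u0 by simp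
  next
    case False
    then have "t \<in> {0<..1}" using that by auto
    then show ?thesis using fC[rule_format, of t] by (simp add: C_def)
  qed
  have fabs: "dist (f x') (f x) \<le> \<bar>ell x' - ell x\<bar>" if "x \<in> {0..1}" "x' \<in> {0..1}" for x x'
  proof (cases "x \<le> x'")
    case True then show ?thesis using fd[rule_format, of x x'] that by (auto simp: dist_commute)
  next
    case False then show ?thesis using fd[rule_format, of x' x] that by auto
  qed
  have cont_f: "continuous_on {0..1} f"
    unfolding continuous_on_iff
  proof (intro ballI allI impI)
    fix x e :: real assume x: "x \<in> {0..1}" and e: "0 < e"
    obtain d where d: "d > 0" "\<forall>s'. 0 \<le> s' \<and> s' \<le> 1 \<and> \<bar>s' - x\<bar> < d \<longrightarrow> \<bar>ell s' - ell x\<bar> < e"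
      using ell_cont[of x e] x e by auto
    show "\<exists>d>0. \<forall>x'\<in>{0..1}. dist x' x < d \<longrightarrow> dist (f x') (f x) < e"
    proof (intro exI conjI ballI impI)
      fix x' assume x': "x' \<in> {0..1}" "dist x' x < d"
      then have "\<bar>ell x' - ell x\<bar> < e" using d by (auto simp: dist_real_def)
      then show "dist (f x') (f x) < e" using fabs[OF x x'(1)] by linarith
    qed (rule d(1))
  qed
  have L: "curve_length \<alpha> 0 1 = ereal (ell 1)"
    using cl_fin(1)[of 0 1 \<alpha>] fin unfolding ell_def by simp
  have up: "curve_length f 0 1 \<le> ereal (ell 1)"
  proof (rule cl_le)
    fix p assume p: "p \<in> parts 0 1"
    obtain t n where tn: "p = (t,n)" by (cases p)
    have P: "(t,n) \<in> parts 0 1" using p tn by simp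
    have "psum f (t,n) \<le> (\<Sum>k<n. ell (t (Suc k)) - ell (t k))"
      unfolding psum_def
    proof (simp, rule sum_mono)
      fix k assume "k \<in> {..<n}"
      then have "k < n" by simp
      then have "0 \<le> t k" "t k \<le> t (Suc k)" "t (Suc k) \<le> 1"
        using parts_range[OF P, of k] parts_range[OF P, of "Suc k"] P by (auto simp: parts_def)
      then show "dist (f (t k)) (f (t (Suc k))) \<le> ell (t (Suc k)) - ell (t k)" using fd by blast
    qed
    also have "\<dots> = ell (t n) - ell (t 0)" by (rule sum_lessThan_telescope)
    also have "\<dots> = ell 1" using P ell0 by (simp add: parts_def)
    finally show "psum f p \<le> ell 1" using tn by simp
  qed
  have eq: "curve_length (\<pi> \<circ> f) 0 1 = curve_length \<alpha> 0 1"
    unfolding cl_eq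
  proof (rule SUP_cong[OF refl])
    fix p assume p: "p \<in> parts 0 1"
    obtain t n where tn: "p = (t,n)" by (cases p)
    have P: "(t,n) \<in> parts 0 1" using p tn by simp
    have "psum (\<pi> \<circ> f) (t,n) = psum \<alpha> (t,n)"
      unfolding psum_def
    proof (simp, rule sum.cong[OF refl])
      fix k assume "k \<in> {..<n}"
      then have "t k \<in> {0..1}" "t (Suc k) \<in> {0..1}"
        using parts_range[OF P, of k] parts_range[OF P, of "Suc k"] by auto
      then show "dist (\<pi> (f (t k))) (\<pi> (f (t (Suc k)))) = dist (\<alpha> (t k)) (\<alpha> (t (Suc k)))"
        using fpi by simp
    qed
    then show "ereal (psum (\<pi> \<circ> f) p) = ereal (psum \<alpha> p)" using tn by simp
  qed
  have low: "curve_length (\<pi> \<circ> f) 0 1 \<le> curve_length f 0 1"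
    unfolding cl_eq
  proof (rule SUP_mono)
    fix p assume p: "p \<in> parts 0 1"
    have "psum (\<pi> \<circ> f) p \<le> psum f p"
      unfolding psum_def by (rule sum_mono) (simp add: sub_lip[OF sub])
    then show "\<exists>q\<in>parts 0 1. ereal (psum (\<pi> \<circ> f) p) \<le> ereal (psum f q)" using p by auto
  qed
  have "curve_length f 0 1 = curve_length (\<pi> \<circ> f) 0 1"
    using up low eq L by (metis order_antisym)
  then have "horizontal \<pi> f" using cont_f by (simp add: horizontal_def)
  then show ?thesis using f0 fpi by blast
qed

end

theorem mainTheorem7:
  fixes \<pi> :: "'e::heine_borel \<Rightarrow> 'x::heine_borel"
    and \<alpha> :: "real \<Rightarrow> 'x" and u :: 'e
  assumes "submetry \<pi>"
    and "rectifiable_curve \<alpha>"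
    and "\<pi> u = \<alpha> 0"
  shows "(\<exists>\<gamma>. horizontal \<pi> \<gamma> \<and> \<gamma> 0 = u \<and> (\<forall>t\<in>{0..1}. \<pi> (\<gamma> t) = \<alpha> t))
         \<and> horiz_transport \<pi> \<alpha> u \<noteq> {}"
proof -
  interpret liftctx \<alpha> \<pi> u
    using assms by unfold_locales (auto simp: rectifiable_curve_def)
  have ex: "\<exists>\<gamma>. horizontal \<pi> \<gamma> \<and> \<gamma> 0 = u \<and> (\<forall>t\<in>{0..1}. \<pi> (\<gamma> t) = \<alpha> t)"
    by (rule main_lift)
  then have "horiz_transport \<pi> \<alpha> u \<noteq> {}" unfolding horiz_transport_def by blast
  with ex show ?thesis by blast
qed

end
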